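(* Let $G=(V,E)$ be a finite, undirected, unweighted, connected graph with $n=|V|$, and let $k$ be the length of a shortest walk in $G$ visiting every vertex at least once. The CNOT cost of the QFT circuit produced by the construction in the context is at most $3kn-2n$.
   Context: A walk is a sequence $(u_1,\dots,u_h)$ of vertices with consecutive entries adjacent (repetitions allowed), of length $h$. Each vertex carries one physical qubit; two-qubit gates only act on qubits at adjacent vertices. Gates: Hadamard $H$; controlled phase $CR_d=\mathrm{diag}(1,1,1,e^{i\pi/2^{d-1}})$; SWAP. Construction: let $P$ be a shortest walk in $G$ visiting all vertices. Place logical qubit $r$ ($1\le r\le n$) on the $r$-th distinct vertex of $P$ in order of first occurrence; whenever a SWAP is applied the logical qubits on its two vertices exchange places. Let $R=V$. For $r=1,\dots,n$: let $P'=(u_1,\dots,u_{k'})$ be $P$ if $r=1$, and otherwise a shortest walk in the induced subgraph $G[R]$ that starts at the vertex currently holding logical qubit $r$ and visits every vertex of $R$. Cascade $r$: apply $H$ to $u_1$; $j=1$, $U=\emptyset$; while $j\le k'-1$: (i) if $u_{j+1}\notin U$, apply $CR_d$ with control $u_{j+1}$, target $u_j$, where $d$ is (index of the logical qubit on $u_{j+1}$) $-\,r$, and add $u_{j+1}$ to $U$; (ii) if $j\le k'-2$ and $u_{j+2}=u_j$, set $j\leftarrow j+2$; otherwise, if $k'\ne 2$ apply SWAP to $u_j,u_{j+1}$, and set $j\leftarrow j+1$. After cascade $r$, remove from $R$ the vertex holding logical qubit $r$. CNOT cost: number of CNOTs after decomposition, counting $H$ as 0, each $CR_d$ as 2, each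 SWAP as 3, and a $CR_d$ immediately followed by a SWAP on the same two qubits as 3 in total. *)

theory Defs
  imports Main
begin

definition walk_in :: "'a set \<Rightarrow> ('a \<Rightarrow> 'a \<Rightarrow> bool) \<Rightarrow> 'a list \<Rightarrow> bool" where
  "walk_in S E xs \<longleftrightarrow> xs \<noteq> [] \<and> set xs \<subseteq> S \<and>
     (\<forall>i. Suc i < length xs \<longrightarrow> E (xs ! i) (xs ! Suc i))"

definition covering_walk :: "'a set \<Rightarrow> ('a \<Rightarrow> 'a \<Rightarrow> bool) \<Rightarrow> 'a list \<Rightarrow> bool" where
  "covering_walk S E xs \<longleftrightarrow> walk_in S E xs \<and> set xs = S"

definition shortest_covering_walk :: "'a set \<Rightarrow> ('a \<Rightarrow> 'a \<Rightarrow> bool) \<Rightarrow> 'a list \<Rightarrow> bool" where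
  "shortest_covering_walk S E xs \<longleftrightarrow> covering_walk S E xs \<and>
     (\<forall>ys. covering_walk S E ys \<longrightarrow> length xs \<le> length ys)"

definition shortest_covering_walk_from :: "'a set \<Rightarrow> ('a \<Rightarrow> 'a \<Rightarrow> bool) \<Rightarrow> 'a \<Rightarrow> 'a list \<Rightarrow> bool" where
  "shortest_covering_walk_from S E v xs \<longleftrightarrow> covering_walk S E xs \<and> hd xs = v \<and>
     (\<forall>ys. covering_walk S E ys \<and> hd ys = v \<longrightarrow> length xs \<le> length ys)"

definition min_cover_walk_length :: "'a set \<Rightarrow> ('a \<Rightarrow> 'a \<Rightarrow> bool) \<Rightarrow> nat" where
  "min_cover_walk_length V E = (LEAST h. \<exists>xs. covering_walk V E xs \<and> length xs = h)"

text \<open>Gates acting on (the qubits at) vertices: Hadamard, CR_d with control and target, SWAP.\<close>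
datatype 'a gate = Had 'a | CR int 'a 'a | SWAP 'a 'a

fun cnot_cost :: "'a gate list \<Rightarrow> nat" where
  "cnot_cost [] = 0"
| "cnot_cost (CR d c t # SWAP a b # rest) =
     (if {c, t} = {a, b} then 3 + cnot_cost rest else 2 + cnot_cost (SWAP a b # rest))"
| "cnot_cost (CR d c t # rest) = 2 + cnot_cost rest"
| "cnot_cost (SWAP a b # rest) = 3 + cnot_cost rest"
| "cnot_cost (Had v # rest) = cnot_cost rest"

text \<open>Placement q: q v is the index of the logical qubit currently on vertex v.
The loop of a cascade, run on the suffix (u_j, ..., u_k') of the walk.
Arguments: r, ns (= no swaps, i.e. k' = 2), the set U, the placement.\<close>
fun casc :: "nat \<Rightarrow> bool \<Rightarrow> 'a set \<Rightarrow> ('a \<Rightarrow> nat) \<Rightarrow> 'a list \<Rightarrow> 'a gate list \<times> ('a \<Rightarrow> nat)" where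
  "casc r ns U q (a # b # rest) =
     (let g1 = (if b \<notin> U then [CR (int (q b) - int r) b a] else []);
          U' = insert b U
      in if rest \<noteq> [] \<and> hd rest = a
         then (let (gs, q') = casc r ns U' q rest in (g1 @ gs, q'))
         else (let q1 = (if ns then q else q(a := q b, b := q a));
                   g2 = (if ns then [] else [SWAP a b]);
                   (gs, q') = casc r ns U' q1 (b # rest)
               in (g1 @ g2 @ gs, q')))"
| "casc r ns U q xs = ([], q)"

definition cascade :: "nat \<Rightarrow> 'a list \<Rightarrow> ('a \<Rightarrow> nat) \<Rightarrow> 'a gate list \<times> ('a \<Rightarrow> nat)" where
  "cascade r w q = (let (gs, q') = casc r (length w = 2) {} q w in (Had (hd w) # gs, q'))"

definition init_place :: "'a list \<Rightarrow> 'a \<Rightarrow> nat" where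
  "init_place P v = (if v \<in> set P then Suc (THE i. i < length (remdups P) \<and> remdups P ! i = v) else 0)"

text \<open>W r is the walk P' used in cascade r (W 1 = P).  place W r = placement after cascade r.\<close>
primrec place :: "(nat \<Rightarrow> 'a list) \<Rightarrow> nat \<Rightarrow> 'a \<Rightarrow> nat" where
  "place W 0 = init_place (W 1)"
| "place W (Suc r) = snd (cascade (Suc r) (W (Suc r)) (place W r))"

text \<open>remaining V W (r-1) is the set R used in cascade r.\<close>
primrec remaining :: "'a set \<Rightarrow> (nat \<Rightarrow> 'a list) \<Rightarrow> nat \<Rightarrow> 'a set" where
  "remaining V W 0 = V"
| "remaining V W (Suc r) = remaining V W r - {v. place W (Suc r) v = Suc r}"

definition valid_walks :: "'a set \<Rightarrow> ('a \<Rightarrow> 'a \<Rightarrow> bool) \<Rightarrow> (nat \<Rightarrow> 'a list) \<Rightarrow> bool" where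
  "valid_walks V E W \<longleftrightarrow> shortest_covering_walk V E (W 1) \<and>
     (\<forall>r. 2 \<le> r \<and> r \<le> card V \<longrightarrow>
        hd (W r) \<in> remaining V W (r - 1) \<and> place W (r - 1) (hd (W r)) = r \<and>
        shortest_covering_walk_from (remaining V W (r - 1)) E (hd (W r)) (W r))"

definition qft_circuit :: "'a set \<Rightarrow> (nat \<Rightarrow> 'a list) \<Rightarrow> 'a gate list" where
  "qft_circuit V W = concat (map (\<lambda>r. fst (cascade r (W r) (place W (r - 1)))) [1..<card V + 1])"

end

theory Submission
  imports Defs
begin


lemma casc_ns: "snd (casc r True U q w) = q"
  by (induction r True U q w rule: casc.induct) (auto simp: Let_def split: prod.splits)

lemma casc_last: "w \<noteq> [] \<Longrightarrow> snd (casc r False U q w) (last w) = q (hd w)"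
proof (induction r False U q w rule: casc.induct)
  case (1 r U q a b rest)
  show ?case
  proof (cases "rest \<noteq> [] \<and> hd rest = a")
    case True
    then show ?thesis using 1 by (auto simp: Let_def split: prod.splits)
  next
    case False
    then show ?thesis using 1(2)[of "if b \<notin> U then [CR (int (q b) - int r) b a] else []" "insert b U"]
      by (auto simp: Let_def split: prod.splits)
  qed
qed auto

lemma cost_CR: "cnot_cost (CR d c t # gs) \<le> 2 + cnot_cost gs"
  by (cases gs rule: cnot_cost.cases) auto

lemma cost_append: "cnot_cost (xs @ ys) \<le> cnot_cost xs + cnot_cost ys"
  by (induction xs rule: cnot_cost.induct) (auto intro: order.trans[OF cost_CR])

lemma casc_cost: "cnot_cost (fst (casc r ns U q w)) \<le> 3 * (length w - 1)"
proof (induction r ns U q w rule: casc.induct)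
  case (1 r ns U q a b rest)
  show ?case
  proof (cases "rest \<noteq> [] \<and> hd rest = a")
    case True
    obtain gs q' where e: "casc r ns (insert b U) q rest = (gs, q')" by force
    have ih: "cnot_cost gs \<le> 3 * (length rest - 1)"
      using 1(1)[of "if b \<notin> U then [CR (int (q b) - int r) b a] else []" "insert b U"] True e by simp
    have "length rest \<ge> 1" using True by (cases rest) auto
    then have "2 + cnot_cost gs \<le> 3 * (length (a # b # rest) - 1)" using ih by simp
    then show ?thesis using True e cost_CR[of "int (q b) - int r" b a gs]
      by (auto simp: Let_def)
  next
    case False
    define q1 where "q1 = (if ns then q else q(a := q b, b := q a))"
    obtain gs q' where e: "casc r ns (insert b U) q1 (b # rest) = (gs, q')" by force
    have ih: "cnot_cost gs \<le> 3 * length rest"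
      using 1(2)[of "if b \<notin> U then [CR (int (q b) - int r) b a] else []" "insert b U" q1
         "if ns then [] else [SWAP a b]"] False e q1_def by simp
    show ?thesis
    proof (cases ns)
      case True
      then show ?thesis using False e ih cost_CR[of "int (q b) - int r" b a gs] q1_def
        by (auto simp: Let_def)
    next
      case nns: False
      then show ?thesis using False e ih q1_def
        by (auto simp: Let_def insert_commute)
    qed
  qed
qed auto



lemma walk_single[simp]: "walk_in S E [x] \<longleftrightarrow> x \<in> S"
  by (auto simp: walk_in_def)

lemma walk_cons2[simp]: "walk_in S E (x # y # xs) \<longleftrightarrow> x \<in> S \<and> E x y \<and> walk_in S E (y # xs)"
proof
  assume "walk_in S E (x # y # xs)"
  then show "x \<in> S \<and> E x y \<and> walk_in S E (y # xs)"
    unfolding walk_in_def by (auto dest: spec[of _ "Suc _"] spec[of _ 0])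
next
  assume h: "x \<in> S \<and> E x y \<and> walk_in S E (y # xs)"
  show "walk_in S E (x # y # xs)"
    unfolding walk_in_def
  proof (intro conjI allI impI)
    fix i assume "Suc i < length (x # y # xs)"
    then show "E ((x # y # xs) ! i) ((x # y # xs) ! Suc i)"
      using h unfolding walk_in_def by (cases i) auto
  qed (use h in \<open>auto simp: walk_in_def\<close>)
qed

lemma walk_append_iff:
  "walk_in S E (as @ x # bs) \<longleftrightarrow> walk_in S E (as @ [x]) \<and> walk_in S E (x # bs)"
proof (induction as)
  case Nil
  then show ?case by (cases bs) auto
next
  case (Cons a as)
  then show ?case by (cases as) auto
qed

lemma walk_set: "walk_in S E xs \<Longrightarrow> set xs \<subseteq> S"
  by (simp add: walk_in_def)

lemma cross_fwd:
  "walk_in S E (z # zs) \<Longrightarrow> z \<in> T \<Longrightarrow> b \<in> set zs \<Longrightarrow> b \<notin> T \<Longrightarrow>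
   \<exists>x y. x \<in> T \<and> y \<notin> T \<and> x \<in> set (z # zs) \<and> y \<in> set (z # zs) \<and> E x y"
proof (induction zs arbitrary: z)
  case Nil
  then show ?case by simp
next
  case (Cons w ws)
  have h: "walk_in S E (w # ws)" "E z w" using Cons.prems(1) by auto
  show ?case
  proof (cases "w \<in> T")
    case True
    then have "b \<in> set ws" using Cons.prems by auto
    then obtain x y where "x \<in> T" "y \<notin> T" "x \<in> set (w # ws)" "y \<in> set (w # ws)" "E x y"
      using Cons.IH[OF h(1) True _ Cons.prems(4)] by blast
    moreover have "set (w # ws) \<subseteq> set (z # w # ws)" by auto
    ultimately show ?thesis by blast
  next
    case False
    have "z \<in> set (z # w # ws)" "w \<in> set (z # w # ws)" by simp_all
    then show ?thesis using h(2) Cons.prems(2) False by blast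
  qed
qed

lemma cross_edge:
  assumes w: "walk_in S E xs" and a: "a \<in> set xs" "a \<in> T" and b: "b \<in> set xs" "b \<notin> T"
    and sym: "\<forall>u v. E u v \<longrightarrow> E v u"
  shows "\<exists>x y. x \<in> T \<and> y \<notin> T \<and> x \<in> set xs \<and> y \<in> set xs \<and> E x y"
proof -
  obtain as bs where sp: "xs = as @ a # bs" using split_list[OF a(1)] by blast
  have w1: "walk_in S E (as @ [a])" "walk_in S E (a # bs)" using w sp walk_append_iff[of S E as a bs] by simp_all
  show ?thesis
  proof (cases "b \<in> set bs")
    case True
    then show ?thesis using cross_fwd[OF w1(2) a(2) True b(2)] sp by auto
  next
    case False
    then have "b \<in> set as" using b sp a(2) by auto
    then obtain cs ds where sp2: "as = cs @ b # ds" using split_list by metis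
    have "walk_in S E (b # ds @ [a])" using w1(1) sp2 walk_append_iff[of S E cs b "ds @ [a]"] by simp
    then obtain x y where xy: "x \<in> - T" "y \<notin> - T" "x \<in> set (b # ds @ [a])" "y \<in> set (b # ds @ [a])" "E x y"
      using cross_fwd[of S E b "ds @ [a]" "- T" a] b(2) a(2) by auto
    have "E y x" using xy(5) sym by blast
    moreover have "x \<in> set xs" "y \<in> set xs" using xy(3,4) sp sp2 by auto
    ultimately show ?thesis using xy(1,2) by blast
  qed
qed

lemma dfs_walk:
  assumes fin: "finite S" and cw: "covering_walk S E ws" and sym: "\<forall>u v. E u v \<longrightarrow> E v u"
    and v: "v \<in> S"
  shows "1 \<le> m \<Longrightarrow> m \<le> card S \<Longrightarrow>
    \<exists>w. walk_in S E w \<and> hd w = v \<and> card (set w) = m \<and> length w = 2 * m - 1"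
proof (induction m)
  case 0
  then show ?case by simp
next
  case (Suc m)
  show ?case
  proof (cases m)
    case 0
    then show ?thesis using v by (intro exI[of _ "[v]"]) auto
  next
    case (Suc m')
    then obtain w where w: "walk_in S E w" "hd w = v" "card (set w) = m" "length w = 2 * m - 1"
      using Suc.IH Suc.prems by auto
    have sub: "set w \<subseteq> S" using w walk_set by blast
    have "set w \<noteq> S" using w Suc.prems by auto
    then obtain b where b: "b \<in> S" "b \<notin> set w" using sub by auto
    have wne: "w \<noteq> []" using w(4) Suc by auto
    have vw: "v \<in> set w" using w(2) wne by auto
    have sws: "set ws = S" "walk_in S E ws" using cw by (auto simp: covering_walk_def)
    have vws: "v \<in> set ws" "b \<in> set ws" using v b sws by auto
    have "\<exists>x y. x \<in> set w \<and> y \<notin> set w \<and> x \<in> set ws \<and> y \<in> set ws \<and> E x y"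
      by (rule cross_edge[OF sws(2) vws(1) vw vws(2) b(2) sym])
    then obtain x y where xy: "x \<in> set w" "y \<notin> set w" "y \<in> set ws" "E x y"
      by blast
    have Exy: "E x y" using xy by auto
    have yS: "y \<in> S" using xy sws by auto
    obtain as bs where sp: "w = as @ x # bs" using split_list[OF xy(1)] by auto
    define w' where "w' = as @ x # y # x # bs"
    have xS: "x \<in> S" using sub xy by auto
    have Eyx: "E y x" using Exy sym by blast
    have p: "walk_in S E (as @ [x])" "walk_in S E (x # bs)"
      using w(1) sp walk_append_iff[of S E as x bs] by simp_all
    have "walk_in S E (x # y # x # bs)" using p(2) Exy Eyx xS yS by simp
    then have W1: "walk_in S E w'" using p(1) walk_append_iff[of S E as x "y # x # bs"] unfolding w'_def
      by blast
    have W2: "hd w' = v" using w(2) sp unfolding w'_def by (cases as) simp_all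
    have "set w' = insert y (set w)" using sp unfolding w'_def by auto
    then have W3: "card (set w') = Suc m" using xy(2) w(3) by simp
    have W4: "length w' = 2 * Suc m - 1" using w(4) sp \<open>m = Suc m'\<close> unfolding w'_def by simp
    show ?thesis using W1 W2 W3 W4 by blast
  qed
qed

lemma dfs_cover:
  assumes fin: "finite S" and cw: "covering_walk S E ws" and sym: "\<forall>u v. E u v \<longrightarrow> E v u"
    and v: "v \<in> S"
  shows "\<exists>w. covering_walk S E w \<and> hd w = v \<and> length w = 2 * card S - 1"
proof -
  have "card S \<ge> 1" using fin v by (metis One_nat_def Suc_leI card_gt_0_iff empty_iff) 
  then obtain w where w: "walk_in S E w" "hd w = v" "card (set w) = card S" "length w = 2 * card S - 1"
    using dfs_walk[OF assms, of "card S"] by auto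
  have "set w = S" using w walk_set fin by (metis card_subset_eq)
  then show ?thesis using w by (auto simp: covering_walk_def)
qed


lemma casc_keeps:
  "set w \<subseteq> S \<Longrightarrow> v \<in> S \<Longrightarrow> q v = x \<Longrightarrow> \<exists>u\<in>S. snd (casc r ns U q w) u = x"
proof (induction r ns U q w arbitrary: v rule: casc.induct)
  case (1 r ns U q a b rest)
  show ?case
  proof (cases "rest \<noteq> [] \<and> hd rest = a")
    case True
    then show ?thesis using 1(1)[of "if b \<notin> U then [CR (int (q b) - int r) b a] else []" "insert b U" v] 1(3-5)
      by (auto simp: Let_def split: prod.splits)
  next
    case False
    define q1 where "q1 = (if ns then q else q(a := q b, b := q a))"
    have "\<exists>v'\<in>S. q1 v' = x"
    proof (cases ns)
      case True then show ?thesis using 1(4,5) q1_def by auto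
    next
      case False
      have ab: "a \<in> S" "b \<in> S" using 1(3) by auto
      show ?thesis
      proof (cases "v = a")
        case True then show ?thesis using ab 1(5) q1_def False by (intro bexI[of _ b]) auto
      next
        case va: False
        show ?thesis
        proof (cases "v = b")
          case True then show ?thesis using ab 1(5) q1_def False va by (intro bexI[of _ a]) auto
        next
          case False then show ?thesis using 1(4,5) q1_def va by (intro bexI[of _ v]) auto
        qed
      qed
    qed
    then obtain v' where v': "v' \<in> S" "q1 v' = x" by blast
    have "\<exists>u\<in>S. snd (casc r ns (insert b U) q1 (b # rest)) u = x"
      using 1(2)[of "if b \<notin> U then [CR (int (q b) - int r) b a] else []" "insert b U" q1
         "if ns then [] else [SWAP a b]" v'] False q1_def v' 1(3) by auto
    then show ?thesis using False q1_def by (auto simp: Let_def split: prod.splits)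
  qed
qed auto

lemma init_place_1: "P \<noteq> [] \<Longrightarrow> \<exists>v\<in>set P. init_place P v = 1"
proof -
  assume P: "P \<noteq> []"
  have ne: "remdups P \<noteq> []" using P by simp
  define v where "v = remdups P ! 0"
  have vP: "v \<in> set P" using ne v_def by (metis length_greater_0_conv nth_mem set_remdups)
  have "(THE i. i < length (remdups P) \<and> remdups P ! i = v) = 0"
  proof (rule the_equality)
    show "0 < length (remdups P) \<and> remdups P ! 0 = v" using ne v_def by auto
  next
    fix i assume "i < length (remdups P) \<and> remdups P ! i = v"
    then show "i = 0" using ne v_def nth_eq_iff_index_eq[OF distinct_remdups, where i=i and j=0] by auto
  qed
  then show ?thesis using vP by (intro bexI[of _ v]) (auto simp: init_place_def)
qed

lemma sum_tri: "2 * (\<Sum>i<n. (i::nat)) = n * (n - 1)"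
proof (induction n)
  case (Suc n)
  have "2 * (\<Sum>i<Suc n. i) = 2 * (\<Sum>i<n. i) + 2 * n" by simp
  also have "\<dots> = n * (n - 1) + 2 * n" using Suc by simp
  also have "\<dots> = Suc n * (Suc n - 1)" by (cases n) (auto simp: algebra_simps)
  finally show ?case .
qed simp

lemma sum_rev: "(\<Sum>r\<in>{1..<n+1}. n - r) = (\<Sum>i<n. (i::nat))"
proof -
  have "(\<Sum>r\<in>{1..<n+1}. n - r) = (\<Sum>i<n. n - Suc i)"
  proof -
    have "{1..<n+1} = {Suc 0..<Suc n}" by simp
    then have "(\<Sum>r\<in>{1..<n+1}. n - r) = (\<Sum>i\<in>{0..<n}. n - Suc i)"
      using sum.shift_bounds_Suc_ivl[of "\<lambda>r. n - r" 0 n] by simp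
    then show ?thesis by (simp add: lessThan_atLeast0)
  qed
  also have "\<dots> = (\<Sum>i<n. i)" by (rule sum.nat_diff_reindex)
  finally show ?thesis .
qed

lemma concat_cost: "cnot_cost (concat xss) \<le> sum_list (map cnot_cost xss)"
  by (induction xss) (auto intro: order.trans[OF cost_append])

lemma cascade_fst: "fst (cascade r w q) = Had (hd w) # fst (casc r (length w = 2) {} q w)"
  by (simp add: cascade_def case_prod_beta)

theorem theorem6:
  fixes V :: "'a set" and E :: "'a \<Rightarrow> 'a \<Rightarrow> bool" and W :: "nat \<Rightarrow> 'a list"
  assumes "finite V" and "V \<noteq> {}"
    and "\<forall>u v. E u v \<longrightarrow> u \<in> V \<and> v \<in> V"
    and "\<forall>u v. E u v \<longrightarrow> E v u"
    and "\<forall>v. \<not> E v v"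
    and "\<forall>u\<in>V. \<forall>v\<in>V. E\<^sup>*\<^sup>* u v"
    and "valid_walks V E W"
  shows "int (cnot_cost (qft_circuit V W))
           \<le> 3 * int (min_cover_walk_length V E) * int (card V) - 2 * int (card V)"
proof -
  define n where "n = card V"
  define R where "R = remaining V W"
  define pl where "pl = place W"
  note fin = assms(1) and sym = assms(4)
  have vw1: "shortest_covering_walk V E (W 1)" using assms(7) by (simp add: valid_walks_def)
  have vwr: "\<And>r. 2 \<le> r \<Longrightarrow> r \<le> n \<Longrightarrow> hd (W r) \<in> R (r - 1) \<and> pl (r - 1) (hd (W r)) = r \<and>
        shortest_covering_walk_from (R (r - 1)) E (hd (W r)) (W r)"
    using assms(7) unfolding valid_walks_def R_def pl_def n_def by blast
  have Rsuc: "\<And>r. R (Suc r) = R r - {v. pl (Suc r) v = Suc r}"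
    by (simp add: R_def pl_def)
  have plsuc: "\<And>r. pl (Suc r) = snd (casc (Suc r) (length (W (Suc r)) = 2) {} (pl r) (W (Suc r)))"
    by (simp add: pl_def cascade_def split: prod.splits)
  have A: "covering_walk (R (r - 1)) E (W r) \<and> (\<exists>v\<in>R (r - 1). pl (r - 1) v = r) \<and>
      length (W r) \<le> 2 * card (R (r - 1)) - 1"
    if r: "1 \<le> r" "r \<le> n" for r
  proof (cases "r = 1")
    case True
    have cw: "covering_walk V E (W 1)" using vw1 by (simp add: shortest_covering_walk_def)
    then have ne: "W 1 \<noteq> []" by (simp add: covering_walk_def walk_in_def)
    obtain v where "v \<in> V" using assms(2) by blast
    then obtain w where w: "covering_walk V E w" "length w = 2 * card V - 1"
      using dfs_cover[OF fin cw sym] by blast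
    have "length (W 1) \<le> 2 * card V - 1" using vw1 w unfolding shortest_covering_walk_def by metis
    moreover have "\<exists>v\<in>V. pl 0 v = 1"
      using init_place_1[OF ne] cw by (simp add: pl_def covering_walk_def)
    ultimately show ?thesis using True cw by (simp add: R_def)
  next
    case False
    then have h: "hd (W r) \<in> R (r - 1) \<and> pl (r - 1) (hd (W r)) = r \<and>
        shortest_covering_walk_from (R (r - 1)) E (hd (W r)) (W r)" using vwr r by auto
    then have cw: "covering_walk (R (r - 1)) E (W r)" by (simp add: shortest_covering_walk_from_def)
    have finR: "finite (R (r - 1))" using cw by (metis covering_walk_def List.finite_set)
    obtain w where w: "covering_walk (R (r - 1)) E w" "hd w = hd (W r)" "length w = 2 * card (R (r - 1)) - 1"
      using dfs_cover[OF finR cw sym] h by blast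
    have "length (W r) \<le> 2 * card (R (r - 1)) - 1"
      using h w unfolding shortest_covering_walk_from_def by metis
    then show ?thesis using h cw by blast
  qed
  have B: "r \<le> n \<Longrightarrow> card (R r) + r \<le> n" for r
  proof (induction r)
    case 0
    then show ?case by (simp add: R_def n_def)
  next
    case (Suc r)
    have a: "covering_walk (R r) E (W (Suc r))" "\<exists>v\<in>R r. pl r v = Suc r"
      using A[of "Suc r"] Suc.prems by auto
    have sw: "set (W (Suc r)) = R r" using a(1) by (simp add: covering_walk_def)
    obtain v where v: "v \<in> R r" "pl r v = Suc r" using a(2) by blast
    obtain u where u: "u \<in> R r" "pl (Suc r) u = Suc r"
      using casc_keeps[of "W (Suc r)" "R r" v "pl r" "Suc r" "Suc r" "length (W (Suc r)) = 2" "{}"] sw v plsuc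
      by auto
    have finR: "finite (R r)" using sw by (metis List.finite_set)
    have "card (R (Suc r)) < card (R r)"
      unfolding Rsuc using u finR by (intro psubset_card_mono) auto
    then show ?case using Suc by simp
  qed
  have C: "cnot_cost (fst (cascade r (W r) (place W (r - 1)))) \<le> 6 * (n - r)"
    if r: "r \<in> set [1..<card V + 1]" for r
  proof -
    have r1: "1 \<le> r" "r \<le> n" using r by (auto simp: n_def)
    have "cnot_cost (fst (cascade r (W r) (place W (r - 1)))) \<le> 3 * (length (W r) - 1)"
      using casc_cost[of r "length (W r) = 2" "{}" "place W (r - 1)" "W r"]
      by (simp add: cascade_fst)
    also have "\<dots> \<le> 3 * (2 * card (R (r - 1)) - 2)"
    proof -
      have "length (W r) \<le> 2 * card (R (r - 1)) - 1" using A[OF r1] by blast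
      then have "length (W r) - 1 \<le> 2 * card (R (r - 1)) - 2" by arith
      then show ?thesis by simp
    qed
    also have "\<dots> \<le> 6 * (n - r)"
    proof -
      have "card (R (r - 1)) + (r - 1) \<le> n" using B[of "r - 1"] r1 by simp
      then have "2 * card (R (r - 1)) - 2 \<le> 2 * (n - r)" using r1 by arith
      then show ?thesis by simp
    qed
    finally show ?thesis .
  qed
  have "cnot_cost (qft_circuit V W) \<le> sum_list (map (\<lambda>r. cnot_cost (fst (cascade r (W r) (place W (r - 1))))) [1..<card V + 1])"
    unfolding qft_circuit_def using concat_cost[of "map (\<lambda>r. fst (cascade r (W r) (place W (r - 1)))) [1..<card V + 1]"]
    by (simp only: map_map comp_def)
  also have "\<dots> \<le> sum_list (map (\<lambda>r. 6 * (n - r)) [1..<card V + 1])"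
    by (rule sum_list_mono) (use C in auto)
  also have "\<dots> = 6 * (\<Sum>r\<in>{1..<n+1}. n - r)"
    by (simp add: n_def sum_set_upt_conv_sum_list_nat[symmetric] sum_distrib_left)
  also have "\<dots> = 3 * (n * (n - 1))" using sum_rev[of n] sum_tri[of n] by simp
  finally have cost: "cnot_cost (qft_circuit V W) \<le> 3 * (n * (n - 1))" .
  have cw1: "covering_walk V E (W 1)" using vw1 by (simp add: shortest_covering_walk_def)
  have k: "min_cover_walk_length V E = length (W 1)"
    unfolding min_cover_walk_length_def
  proof (rule Least_equality)
    show "\<exists>xs. covering_walk V E xs \<and> length xs = length (W 1)" using cw1 by blast
  next
    fix h assume "\<exists>xs. covering_walk V E xs \<and> length xs = h"
    then show "length (W 1) \<le> h" using vw1 unfolding shortest_covering_walk_def by blast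
  qed
  have kn: "n \<le> length (W 1)"
    using cw1 card_length[of "W 1"] by (simp add: n_def covering_walk_def)
  have "n * n \<le> length (W 1) * n" using kn by simp
  then have "3 * (n * (n - 1)) + 2 * n \<le> 3 * length (W 1) * n"
    by (cases n) (auto simp: algebra_simps)
  then have "int (3 * (n * (n - 1)) + 2 * n) \<le> int (3 * length (W 1) * n)"
    by (simp only: of_nat_le_iff)
  then have "int (3 * (n * (n - 1))) + 2 * int n \<le> 3 * int (length (W 1)) * int n"
    by (simp only: of_nat_add of_nat_mult of_nat_numeral)
  then have "int (3 * (n * (n - 1))) \<le> 3 * int (length (W 1)) * int n - 2 * int n"
    by linarith
  moreover have "int (cnot_cost (qft_circuit V W)) \<le> int (3 * (n * (n - 1)))"
    using cost by (simp only: of_nat_le_iff)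
  ultimately show ?thesis using k unfolding n_def by simp
qed

end
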